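(* Let $2\leq m<n$ be integers. Then $$\textup{res}(\Psi_m(x),\Psi_n(x))=\begin{cases}p^{\varphi(m)}&\text{if } n/m=p^\alpha \text{ for some prime } p \text{ and some positive integer } \alpha;\\ 1&\text{otherwise}.\end{cases}$$
   Context: The Fibonacci polynomials are defined by $F_1(x)=1$, $F_2(x)=x$, and $F_n(x)=xF_{n-1}(x)+F_{n-2}(x)$ for $n\geq 3$. For $n\geq 2$, the $n$-th fibotomic polynomial $\Psi_n(x)\in\mathbb{Z}[x]$ is the product of the monic irreducible factors of $F_n(x)$ which are not factors of $F_k(x)$ for any $k<n$; also $\Psi_1(x)=1$. For $n\ge2$, $\Psi_n$ is monic of degree $\varphi(n)$ (Euler's totient). For monic polynomials $f,g$ with roots $a_1,\dots,a_r$ and $b_1,\dots,b_s$, the resultant is $\textup{res}(f,g)=\prod_{i,j}(a_i-b_j)$. *)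

theory Defs
  imports "HOL-Computational_Algebra.Computational_Algebra" "Subresultants.Resultant_Prelim" "HOL-Number_Theory.Totient"
begin

fun fib_poly :: "nat \<Rightarrow> int poly" where
  "fib_poly 0 = 0"
| "fib_poly (Suc 0) = 1"
| "fib_poly (Suc (Suc n)) = [:0, 1:] * fib_poly (Suc n) + fib_poly n"

definition fibotomic :: "nat \<Rightarrow> int poly" where
  "fibotomic n = (if n \<le> 1 then 1 else
     \<Prod>{p :: int poly. monic p \<and> irreducible p \<and> p dvd fib_poly n \<and>
          (\<forall>k. 1 \<le> k \<and> k < n \<longrightarrow> \<not> p dvd fib_poly k)})"

end

theory Submission
  imports Defs "Subresultants.Subresultant" "Subresultants.Subresultant_Gcd" "HOL-Number_Theory.Totient"
begin


lemma neg_one_pow_sq: "(-1::'a::comm_ring_1)^(a*b) * (-1)^(b*a) = 1"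
  by (simp add: mult.commute[of b a] power_mult_distrib[symmetric])

lemma prod_mset_swap: "(\<Prod>a\<in>#A. \<Prod>b\<in>#B. f a b) = (\<Prod>b\<in>#B. \<Prod>a\<in>#A. (f a b :: 'a :: comm_monoid_mult))"
  by (induction A) (simp_all add: prod_mset.distrib)

lemma prod_mset_const_pow: "(\<Prod>a\<in>#A. (c :: 'a :: comm_monoid_mult)) = c ^ size A"
  by (induction A) auto

lemma prod_mset_poly_const: "(\<Prod>a\<in>#A. poly [:c:] a) = (c :: 'a :: comm_ring_1) ^ size A"
  by (induction A) auto

lemma prod_mset_diff_swap: "(\<Prod>b\<in>#B. b - a) = (-1) ^ size B * (\<Prod>b\<in>#B. a - (b :: 'a :: comm_ring_1))"
  by (induction B) (auto simp: algebra_simps)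

lemma prod_mset_neg: "(\<Prod>a\<in>#A. - (h a :: 'a :: comm_ring_1)) = (-1) ^ size A * (\<Prod>a\<in>#A. h a)"
  by (induction A) (auto simp: algebra_simps)

lemma poly_prod_lin: "poly (\<Prod>a\<in>#A. [:-a, 1:]) x = (\<Prod>a\<in>#A. x - (a::'a::comm_ring_1))"
  by (induction A) (auto simp: algebra_simps)

lemma poly_complex_decomp: "(f::complex poly) \<noteq> 0 \<Longrightarrow> poly f x = lead_coeff f * (\<Prod>a\<in>#proots f. x - a)"
proof -
  assume "f \<noteq> 0"
  have h: "Polynomial.smult (lead_coeff f) (\<Prod>a\<in>#proots f. [:-a, 1:]) = f"
    by (rule complex_poly_decompose_multiset)
  have "poly f x = poly (Polynomial.smult (lead_coeff f) (\<Prod>a\<in>#proots f. [:-a, 1:])) x"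
    by (simp only: h)
  also have "\<dots> = lead_coeff f * (\<Prod>a\<in>#proots f. x - a)"
    by (simp only: poly_smult poly_prod_lin)
  finally show ?thesis .
qed

lemma res_step:
  fixes f g :: "complex poly"
  assumes f0: "f \<noteq> 0" and df: "degree f > 0" and dfg: "degree g \<ge> degree f"
  and IH: "\<And>r. degree r < degree f \<Longrightarrow> resultant f r = lead_coeff f ^ degree r * (\<Prod>a\<in>#proots f. poly r a)"
  shows "resultant f g = lead_coeff f ^ degree g * (\<Prod>a\<in>#proots f. poly g a)"
proof -
  define q r where "q = g div f" and "r = g mod f"
  have eq: "g + (-q) * f = r" unfolding q_def r_def
    using minus_div_mult_eq_mod[of g f] by simp
  have gq: "g = q * f + r" unfolding q_def r_def by simp
  have dr: "degree r < degree f"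
    using df f0 degree_mod_less[of f g] unfolding r_def by (cases "g mod f = 0") auto
  have ch: "degree r < degree f \<or> r = 0 \<and> g \<noteq> 0 \<and> f \<noteq> 0" using dr by auto
  have pr0: "image_mset (poly r) (proots f) = image_mset (poly g) (proots f)"
  proof (rule image_mset_cong)
    fix a assume "a \<in># proots f"
    hence "poly f a = 0" using f0 by simp
    moreover have "poly g a = poly q a * poly f a + poly r a"
      by (subst gq) simp
    ultimately show "poly r a = poly g a" by simp
  qed
  hence pr: "(\<Prod>a\<in>#proots f. poly r a) = (\<Prod>a\<in>#proots f. poly g a)" by simp
  have sw: "resultant f g = (-1)^(degree f * degree g) * resultant g f" by (rule resultant_swap)
  show ?thesis
  proof (cases "degree r > 0")
    case True
    from arg_cong[OF BT_lemma_1_12[OF eq dfg ch True], of "\<lambda>x. coeff x 0"]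
    have "resultant g f = (-1)^(degree g * degree f) * lead_coeff f ^ (degree g - degree r) * resultant f r"
      by (simp add: coeff_subresultant_0_0_resultant)
    also have "resultant f r = lead_coeff f ^ degree r * (\<Prod>a\<in>#proots f. poly g a)"
      using IH[OF dr] pr by simp
    finally have "resultant f g = ((-1)^(degree f * degree g) * (-1)^(degree g * degree f)) * (lead_coeff f ^ (degree g - degree r) * lead_coeff f ^ degree r) * (\<Prod>a\<in>#proots f. poly g a)"
      using sw by (simp only: mult_ac)
    also have "(-1::complex)^(degree f * degree g) * (-1)^(degree g * degree f) = 1"
      by (rule neg_one_pow_sq)
    also have "lead_coeff f ^ (degree g - degree r) * lead_coeff f ^ degree r = lead_coeff f ^ degree g"
      using dr dfg by (simp add: power_add[symmetric])
    finally show ?thesis by simp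
  next
    case False
    hence r0: "degree r = 0" by simp
    have ch2: "degree r < degree f \<or> r \<noteq> 0" using dr by auto
    from arg_cong[OF BT_lemma_1_13[OF eq dfg ch ch2], of "\<lambda>x. coeff x 0"] r0
    have "resultant g f = (-1)^(degree g * degree f) * lead_coeff f ^ degree g * (coeff r 0 ^ (degree f - 1) * coeff r 0)"
      by (simp add: coeff_subresultant_0_0_resultant mult.assoc)
    also have "coeff r 0 ^ (degree f - 1) * coeff r 0 = coeff r 0 ^ degree f"
      using df by (simp add: power_Suc2[symmetric])
    also have "coeff r 0 ^ degree f = (\<Prod>a\<in>#proots f. poly r a)"
    proof -
      obtain c where rc: "r = [:c:]" using r0 by (rule degree_eq_zeroE)
      show ?thesis unfolding rc by (simp add: prod_mset_poly_const size_proots_complex)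
    qed
    finally have "resultant f g = ((-1)^(degree f * degree g) * (-1)^(degree g * degree f)) * (lead_coeff f ^ degree g * (\<Prod>a\<in>#proots f. poly g a))"
      using sw pr by (simp only: mult.assoc)
    also have "(-1::complex)^(degree f * degree g) * (-1)^(degree g * degree f) = 1"
      by (rule neg_one_pow_sq)
    finally show ?thesis by simp
  qed
qed

lemma resultant_roots:
  fixes f g :: "complex poly"
  assumes "f \<noteq> 0"
  shows "resultant f g = lead_coeff f ^ degree g * (\<Prod>a\<in>#proots f. poly g a)"
  using assms
proof (induction "degree f + degree g" arbitrary: f g rule: less_induct)
  case (less f g)
  show ?case
  proof (cases "degree f = 0")
    case True
    then obtain c where f: "f = [:c:]" by (metis degree_eq_zeroE)
    show ?thesis unfolding f by simp
  next
    case df: False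
    show ?thesis
    proof (cases "degree g = 0")
      case True
      then obtain c where g: "g = [:c:]" by (metis degree_eq_zeroE)
      show ?thesis unfolding g by (simp add: prod_mset_poly_const size_proots_complex)
    next
      case dg: False
      show ?thesis
      proof (cases "degree g \<ge> degree f")
        case True
        show ?thesis
          by (rule res_step[OF less.prems _ True]) (use df True in \<open>auto intro!: less.hyps less.prems\<close>)
      next
        case False
        have g0: "g \<noteq> 0" using dg by auto
        have rgf: "resultant g f = lead_coeff g ^ degree f * (\<Prod>b\<in>#proots g. poly f b)"
          by (rule res_step[OF g0]) (use dg False in \<open>auto intro!: less.hyps g0\<close>)
        have A: "(\<Prod>b\<in>#proots g. poly f b) = lead_coeff f ^ degree g * (\<Prod>b\<in>#proots g. \<Prod>a\<in>#proots f. b - a)"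
          using less.prems by (simp add: poly_complex_decomp prod_mset.distrib prod_mset_const_pow size_proots_complex)
        have B: "(\<Prod>a\<in>#proots f. poly g a) = lead_coeff g ^ degree f * (\<Prod>a\<in>#proots f. \<Prod>b\<in>#proots g. a - b)"
          using g0 by (simp add: poly_complex_decomp prod_mset.distrib prod_mset_const_pow size_proots_complex)
        have C: "(\<Prod>b\<in>#proots g. \<Prod>a\<in>#proots f. b - a) = (-1)^(degree f * degree g) * (\<Prod>a\<in>#proots f. \<Prod>b\<in>#proots g. a - b)"
        proof -
          have "(\<Prod>b\<in>#proots g. \<Prod>a\<in>#proots f. b - a) = (\<Prod>a\<in>#proots f. \<Prod>b\<in>#proots g. b - a)"
            by (rule prod_mset_swap[symmetric])
          also have "\<dots> = (\<Prod>a\<in>#proots f. (-1)^degree g * (\<Prod>b\<in>#proots g. a - b))"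
            by (simp only: prod_mset_diff_swap size_proots_complex)
          also have "\<dots> = (-1)^(degree f * degree g) * (\<Prod>a\<in>#proots f. \<Prod>b\<in>#proots g. a - b)"
            by (simp only: prod_mset.distrib prod_mset_const_pow size_proots_complex power_mult[symmetric] mult.commute)
          finally show ?thesis .
        qed
        have "resultant f g = (-1)^(degree f * degree g) * resultant g f" by (rule resultant_swap)
        also have "\<dots> = ((-1)^(degree f * degree g) * (-1)^(degree f * degree g)) * lead_coeff g ^ degree f * lead_coeff f ^ degree g * (\<Prod>a\<in>#proots f. \<Prod>b\<in>#proots g. a - b)"
          unfolding rgf A C by (simp only: mult_ac)
        also have "(-1::complex)^(degree f * degree g) * (-1)^(degree f * degree g) = 1"
          using neg_one_pow_sq[of "degree f" "degree f"] by (simp add: power_mult_distrib[symmetric])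
        finally show ?thesis unfolding B by (simp only: mult_ac mult_1_left mult_1_right)
      qed
    qed
  qed
qed


definition Fc :: "nat \<Rightarrow> complex poly" where
  "Fc n = map_poly of_int (fib_poly n)"

lemma Fc_simps: "Fc 0 = 0" "Fc (Suc 0) = 1"
  "Fc (Suc (Suc n)) = [:0, 1:] * Fc (Suc n) + Fc n"
  unfolding Fc_def by (simp_all add: hom_distribs)

lemma sin_rec_aux: "sin ((real n + 2) * t) = 2 * cos t * sin ((real n + 1) * t) - sin (real n * t)"
proof -
  define A where "A = (real n + 1) * t"
  have a: "(real n + 2) * t = A + t" unfolding A_def by (simp add: algebra_simps)
  have b: "real n * t = A - t" unfolding A_def by (simp add: algebra_simps)
  have "sin (A + t) + sin (A - t) = 2 * cos t * sin A" by (simp add: sin_add sin_diff)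
  thus ?thesis unfolding a b A_def[symmetric] by simp
qed

lemma poly_Fc_trig:
  "\<i> * poly (Fc n) (\<i> * complex_of_real (2 * cos t)) * complex_of_real (sin t)
     = \<i> ^ n * complex_of_real (sin (real n * t))"
proof -
  define z where "z = \<i> * complex_of_real (2 * cos t)"
  define P where "P n \<longleftrightarrow> \<i> * poly (Fc n) z * complex_of_real (sin t) = \<i> ^ n * complex_of_real (sin (real n * t))" for n
  have "P n \<and> P (Suc n)" for n
  proof (induction n)
    case 0
    show ?case unfolding P_def by (simp add: Fc_simps)
  next
    case (Suc n)
    hence h0: "P n" and h1: "P (Suc n)" by auto
    have "\<i> * poly (Fc (Suc (Suc n))) z * complex_of_real (sin t)
        = z * (\<i> * poly (Fc (Suc n)) z * complex_of_real (sin t)) + \<i> * poly (Fc n) z * complex_of_real (sin t)"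
      by (simp add: Fc_simps algebra_simps)
    also have "\<dots> = z * (\<i> ^ Suc n * complex_of_real (sin (real (Suc n) * t))) + \<i> ^ n * complex_of_real (sin (real n * t))"
      using h0 h1 unfolding P_def by simp
    also have "\<dots> = \<i> ^ n * (- complex_of_real (2 * cos t * sin ((real n + 1) * t)) + complex_of_real (sin (real n * t)))"
      unfolding z_def by (simp add: algebra_simps)
    also have "\<dots> = \<i> ^ Suc (Suc n) * complex_of_real (sin ((real n + 2) * t))"
      unfolding sin_rec_aux by (simp add: algebra_simps)
    finally have "P (Suc (Suc n))" unfolding P_def by (simp add: add.commute)
    with h1 show ?case by simp
  qed
  thus ?thesis unfolding P_def z_def by simp
qed

lemma fib_poly_deg: "degree (fib_poly (Suc n)) = n \<and> lead_coeff (fib_poly (Suc n)) = 1"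
proof -
  have "(degree (fib_poly (Suc n)) = n \<and> lead_coeff (fib_poly (Suc n)) = 1) \<and>
        (degree (fib_poly (Suc (Suc n))) = Suc n \<and> lead_coeff (fib_poly (Suc (Suc n))) = 1)"
  proof (induction n)
    case 0
    show ?case by (simp add: monom_Suc)
  next
    case (Suc n)
    hence d1: "degree (fib_poly (Suc (Suc n))) = Suc n" and l1: "lead_coeff (fib_poly (Suc (Suc n))) = 1"
      and d0: "degree (fib_poly (Suc n)) = n" by auto
    have nz: "fib_poly (Suc (Suc n)) \<noteq> 0"
    proof
      assume "fib_poly (Suc (Suc n)) = 0"
      with l1 show False by (simp del: fib_poly.simps)
    qed
    have dx: "degree ([:0, 1:] * fib_poly (Suc (Suc n))) = Suc (Suc n)"
      using d1 nz by (subst degree_mult_eq) (auto simp del: fib_poly.simps)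
    have lx: "lead_coeff ([:0, 1:] * fib_poly (Suc (Suc n))) = 1"
      using l1 nz by (simp add: lead_coeff_mult del: fib_poly.simps)
    have "degree (fib_poly (Suc n)) < degree ([:0, 1:] * fib_poly (Suc (Suc n)))" using dx d0 by linarith
    hence H: "degree ([:0, 1:] * fib_poly (Suc (Suc n)) + fib_poly (Suc n)) = Suc (Suc n) \<and>
           lead_coeff ([:0, 1:] * fib_poly (Suc (Suc n)) + fib_poly (Suc n)) = 1"
      using dx lx by (simp add: degree_add_eq_left lead_coeff_add_le coeff_eq_0 del: fib_poly.simps)
    have e: "fib_poly (Suc (Suc (Suc n))) = [:0,1:] * fib_poly (Suc (Suc n)) + fib_poly (Suc n)"
      by (rule fib_poly.simps(3))
    have X: "degree (fib_poly (Suc (Suc (Suc n)))) = Suc (Suc n) \<and> lead_coeff (fib_poly (Suc (Suc (Suc n)))) = 1"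
      unfolding e by (rule H)
    show ?case using X d1 l1 by blast
  qed
  thus ?thesis by blast
qed

lemma Fc_deg: "degree (Fc (Suc n)) = n" "lead_coeff (Fc (Suc n)) = 1"
proof -
  have d: "degree (fib_poly (Suc n)) = n" and l: "coeff (fib_poly (Suc n)) n = 1"
    using fib_poly_deg[of n] by auto
  show "degree (Fc (Suc n)) = n" unfolding Fc_def using d by (simp add: degree_map_poly)
  show "lead_coeff (Fc (Suc n)) = 1" unfolding Fc_def using d l by (simp add: degree_map_poly coeff_map_poly)
qed


definition rt :: "nat \<Rightarrow> nat \<Rightarrow> complex" where
  "rt n k = \<i> * complex_of_real (2 * cos (real k * pi / real n))"

lemma sin_pos_frac: "0 < k \<Longrightarrow> k < n \<Longrightarrow> sin (real k * pi / real n) > 0"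
  by (rule sin_gt_zero) (auto simp: field_simps)

lemma Fc_root: assumes "0 < k" "k < n" shows "poly (Fc n) (rt n k) = 0"
proof -
  define t where "t = real k * pi / real n"
  have "\<i> * poly (Fc n) (rt n k) * complex_of_real (sin t) = \<i> ^ n * complex_of_real (sin (real n * t))"
    unfolding rt_def t_def by (rule poly_Fc_trig)
  also have "real n * t = real k * pi" unfolding t_def using assms by simp
  finally have "\<i> * poly (Fc n) (rt n k) * complex_of_real (sin t) = 0" by simp
  moreover have "sin t \<noteq> 0" unfolding t_def using sin_pos_frac[OF assms] by simp
  ultimately show ?thesis by simp
qed

lemma rt_eq_iff:
  assumes "k \<le> n" "k' \<le> n'" "0 < n" "0 < n'"
  shows "rt n k = rt n' k' \<longleftrightarrow> k * n' = k' * n"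
proof -
  have "rt n k = rt n' k' \<longleftrightarrow> cos (real k * pi / real n) = cos (real k' * pi / real n')"
    unfolding rt_def by simp
  also have "\<dots> \<longleftrightarrow> real k * pi / real n = real k' * pi / real n'"
  proof
    assume c: "cos (real k * pi / real n) = cos (real k' * pi / real n')"
    have b1: "real k * pi / real n \<le> pi" using assms by (simp add: field_simps)
    have b2: "real k' * pi / real n' \<le> pi" using assms by (simp add: field_simps)
    show "real k * pi / real n = real k' * pi / real n'"
      by (rule cos_inj_pi[OF _ b1 _ b2 c]) auto
  qed simp
  also have "\<dots> \<longleftrightarrow> real k * real n' = real k' * real n"
    using assms by (simp add: field_simps)
  also have "\<dots> \<longleftrightarrow> k * n' = k' * n" by (simp flip: of_nat_mult)
  finally show ?thesis .
qed

lemma order_lin_prod: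
  fixes r :: "'b \<Rightarrow> 'a::idom"
  assumes "finite K" "inj_on r K"
  shows "order a (\<Prod>k\<in>K. [:- r k, 1:]) \<le> 1"
  using assms
proof (induction K rule: finite_induct)
  case empty
  then show ?case by simp
next
  case (insert k K)
  have nz: "(\<Prod>k\<in>K. [:- r k, 1:]) \<noteq> (0::'a poly)" by (simp add: prod_zero_iff insert)
  have o1: "order a [:- r k, 1:] = (if a = r k then 1 else 0)"
    using order_power_n_n[of "r k" 1] by (auto intro: order_0I)
  have pe: "(\<Prod>k\<in>insert k K. [:- r k, 1:]) = [:- r k, 1:] * (\<Prod>k\<in>K. [:- r k, 1:])"
    using insert by simp
  have nz2: "[:- r k, 1:] * (\<Prod>k\<in>K. [:- r k, 1:]) \<noteq> 0"
    using nz by (metis mult_eq_0_iff pCons_eq_0_iff one_neq_zero)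
  have "order a (\<Prod>k\<in>insert k K. [:- r k, 1:]) = order a [:- r k, 1:] + order a (\<Prod>k\<in>K. [:- r k, 1:])"
    unfolding pe by (rule order_mult[OF nz2])
  moreover have "a = r k \<Longrightarrow> order a (\<Prod>k\<in>K. [:- r k, 1:]) = 0"
  proof (rule order_0I)
    assume "a = r k"
    moreover have "r k \<notin> r ` K" using insert by auto
    ultimately show "poly (\<Prod>k\<in>K. [:- r k, 1:]) a \<noteq> 0"
      using insert by (auto simp: poly_prod prod_zero_iff)
  qed
  moreover have "order a (\<Prod>k\<in>K. [:- r k, 1:]) \<le> 1" using insert by auto
  ultimately show ?case using o1 by auto
qed

lemma Fc_prod: assumes "0 < n" shows "Fc n = (\<Prod>k\<in>{0<..<n}. [:- rt n k, 1:])"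
proof (rule ccontr)
  define Q where "Q = (\<Prod>k\<in>{0<..<n}. [:- rt n k, 1:])"
  assume ne: "Fc n \<noteq> (\<Prod>k\<in>{0<..<n}. [:- rt n k, 1:])"
  define D where "D = Fc n - Q"
  have D0: "D \<noteq> 0" using ne unfolding D_def Q_def by simp
  obtain m where n: "n = Suc m" using assms by (cases n) auto
  have dF: "degree (Fc n) = m" "lead_coeff (Fc n) = 1" unfolding n by (rule Fc_deg)+
  have dQ: "degree Q = m" unfolding Q_def by (subst degree_prod_sum_eq) (auto simp: n)
  have lQ: "lead_coeff Q = 1" unfolding Q_def by (simp add: lead_coeff_prod)
  have cD: "coeff D m = 0" unfolding D_def using dF dQ lQ by simp
  have "degree D \<le> m" unfolding D_def using dF dQ by (metis degree_diff_le le_refl)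
  hence dD: "degree D < m" using cD D0 by (metis le_neq_implies_less leading_coeff_0_iff)
  have "rt n ` {0<..<n} \<subseteq> {x. poly D x = 0}"
  proof
    fix x assume "x \<in> rt n ` {0<..<n}"
    then obtain k where k: "0 < k" "k < n" "x = rt n k" by auto
    have "poly Q x = 0" unfolding Q_def poly_prod using k by (auto simp: prod_zero_iff)
    thus "x \<in> {x. poly D x = 0}" using Fc_root[OF k(1,2)] k unfolding D_def by simp
  qed
  hence "card (rt n ` {0<..<n}) \<le> card {x. poly D x = 0}"
    by (intro card_mono poly_roots_finite D0)
  also have "card (rt n ` {0<..<n}) = m"
  proof -
    have "inj_on (rt n) {0<..<n}"
      by (intro inj_onI) (auto simp: rt_eq_iff)
    thus ?thesis by (simp add: card_image n)
  qed
  also have "card {x. poly D x = 0} \<le> degree D" by (rule card_poly_roots_bound[OF D0])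
  finally show False using dD by simp
qed

lemma rt_inj: "0 < n \<Longrightarrow> inj_on (rt n) {0<..<n}"
  by (intro inj_onI) (auto simp: rt_eq_iff)

lemma Fc_order: assumes "0 < n" shows "order a (Fc n) \<le> 1"
  unfolding Fc_prod[OF assms] by (rule order_lin_prod) (auto intro: rt_inj assms)

lemma Fc_nz: "0 < n \<Longrightarrow> Fc n \<noteq> 0"
  using Fc_deg(2)[of "n - 1"] by (cases n) auto

lemma Fc_roots: assumes "0 < n" shows "poly (Fc n) x = 0 \<longleftrightarrow> (\<exists>k. 0 < k \<and> k < n \<and> x = rt n k)"
  unfolding Fc_prod[OF assms] poly_prod by (auto simp: prod_zero_iff)


definition Sset :: "nat \<Rightarrow> int poly set" where
  "Sset n = {p :: int poly. monic p \<and> irreducible p \<and> p dvd fib_poly n \<and>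
          (\<forall>k. 1 \<le> k \<and> k < n \<longrightarrow> \<not> p dvd fib_poly k)}"

lemma fibotomic_Sset: "2 \<le> n \<Longrightarrow> fibotomic n = \<Prod>(Sset n)"
  unfolding fibotomic_def Sset_def by simp

lemma fib_monic: "0 < n \<Longrightarrow> lead_coeff (fib_poly n) = 1"
  using fib_poly_deg[of "n - 1"] by (cases n) auto

lemma fib_nz: "0 < n \<Longrightarrow> fib_poly n \<noteq> 0"
  using fib_monic[of n] by auto

lemma Fc_map: "Fc n = of_int_poly (fib_poly n)" unfolding Fc_def by simp

lemma monic_normalize: "lead_coeff (p::int poly) = 1 \<Longrightarrow> normalize p = p"
  using normalize_mult_unit_factor[of p] by (simp add: unit_factor_poly_def)

lemma prime_fac_monic:
  assumes n: "0 < n" and p: "p \<in> prime_factors (fib_poly n)"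
  shows "lead_coeff p = 1"
proof -
  have pr: "prime p" and dv: "p dvd fib_poly n" using p n fib_nz[OF n] by (auto simp: in_prime_factors_iff)
  then obtain c where c: "fib_poly n = p * c" by (elim dvdE)
  have lc: "lead_coeff p * lead_coeff c = 1" using c fib_monic[OF n] by (metis lead_coeff_mult)
  have "p \<noteq> 0" using pr by auto
  hence u1: "unit_factor (normalize p) = 1" by (rule unit_factor_normalize)
  have "normalize p = p" using pr by (simp add: prime_def)
  with u1 have "unit_factor p = 1" by simp
  hence "sgn (lead_coeff p) = 1" by (simp add: unit_factor_poly_def)
  hence "lead_coeff p > 0" by (simp add: sgn_1_pos)
  with lc show ?thesis by (simp add: pos_zmult_eq_1_iff)
qed

lemma Sset_sub: assumes "0 < n" shows "Sset n \<subseteq> prime_factors (fib_poly n)"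
proof
  fix p assume "p \<in> Sset n"
  hence "monic p" "irreducible p" "p dvd fib_poly n" unfolding Sset_def by auto
  hence "prime p" by (simp add: prime_def monic_normalize irreducible_imp_prime_elem)
  thus "p \<in> prime_factors (fib_poly n)" using \<open>p dvd fib_poly n\<close> fib_nz[OF assms]
    by (auto simp: in_prime_factors_iff)
qed

lemma Sset_finite: "0 < n \<Longrightarrow> finite (Sset n)"
  using Sset_sub finite_subset by blast

lemma prod_primes_dvd:
  fixes x :: "'a :: factorial_semiring_gcd"
  assumes "finite A" "\<And>p. p \<in> A \<Longrightarrow> prime p \<and> p dvd x"
  shows "\<Prod>A dvd x"
  using assms
proof (induction A rule: finite_induct)
  case empty thus ?case by simp
next
  case (insert p A)
  have pp: "prime p" "p dvd x" using insert by auto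
  have "\<not> p dvd \<Prod>A"
  proof
    assume "p dvd \<Prod>A"
    then obtain a where "a \<in> A" "p dvd a" using prime_dvd_prod_iff[OF insert(1) pp(1)] by auto
    hence "p = a" using primes_dvd_imp_eq[OF pp(1)] insert by auto
    thus False using \<open>a \<in> A\<close> insert by auto
  qed
  hence "coprime p (\<Prod>A)" by (rule prime_imp_coprime[OF pp(1)])
  moreover have "\<Prod>A dvd x" using insert by auto
  ultimately have "p * \<Prod>A dvd x" using pp by (intro divides_mult)
  thus ?case using insert by simp
qed

lemma Sset_prime: "p \<in> Sset n \<Longrightarrow> prime p"
  unfolding Sset_def by (simp add: prime_def monic_normalize irreducible_imp_prime_elem)

lemma fibotomic_dvd: assumes "2 \<le> n" shows "fibotomic n dvd fib_poly n"
proof -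
  have "\<Prod>(Sset n) dvd fib_poly n"
    by (rule prod_primes_dvd) (use Sset_finite[of n] assms Sset_prime in \<open>auto simp: Sset_def\<close>)
  thus ?thesis using fibotomic_Sset[OF assms] by simp
qed

lemma common_root_dvd:
  fixes p q :: "int poly"
  assumes irr: "irreducible p" and rp: "poly (of_int_poly p) z = (0::complex)" and rq: "poly (of_int_poly q) z = 0"
  shows "p dvd q"
proof -
  have p0: "p \<noteq> 0" using irr by auto
  hence pc0: "(of_int_poly p :: complex poly) \<noteq> 0" by simp
  have "z \<in># proots (of_int_poly p :: complex poly)" using pc0 rp by simp
  hence "(\<Prod>a\<in>#proots (of_int_poly p :: complex poly). poly (of_int_poly q) a) = 0"
    using rq by (auto simp: prod_mset_zero_iff)
  hence "resultant (of_int_poly p :: complex poly) (of_int_poly q) = 0"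
    by (simp add: resultant_roots[OF pc0])
  hence "resultant p q = 0" by (simp add: of_int_hom.resultant_hom)
  hence dg: "degree (gcd p q) \<noteq> 0" by (simp add: resultant_0_gcd)
  have "gcd p q dvd p" by simp
  from irreducibleD'[OF irr this] have "p dvd gcd p q \<or> is_unit (gcd p q)" .
  moreover have "\<not> is_unit (gcd p q)" using dg by (auto simp: is_unit_poly_iff)
  ultimately have "p dvd gcd p q" by simp
  thus ?thesis using dvd_trans gcd_dvd2 by blast
qed


definition Pset :: "nat \<Rightarrow> nat set" where
  "Pset n = {k. 0 < k \<and> k < n \<and> coprime k n}"

definition Gp :: "nat \<Rightarrow> complex poly" where
  "Gp n = (\<Prod>k\<in>Pset n. [:- rt n k, 1:])"

lemma Pset_finite[simp]: "finite (Pset n)"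
  unfolding Pset_def by (rule finite_subset[of _ "{..<n}"]) auto

lemma psi_map: "2 \<le> n \<Longrightarrow> (of_int_poly (fibotomic n) :: complex poly) = (\<Prod>p\<in>Sset n. of_int_poly p)"
  unfolding fibotomic_Sset by (simp add: of_int_poly_hom.hom_prod)

lemma root_dvd: "p dvd q \<Longrightarrow> poly p z = 0 \<Longrightarrow> poly q (z::'a::comm_ring_1) = 0"
  by (elim dvdE) simp

lemma poly_of_int_prod_mset: "poly (of_int_poly (prod_mset M)) z = (\<Prod>p\<in>#M. poly (of_int_poly p) (z::complex))"
  by (induction M) (simp_all add: of_int_poly_hom.hom_mult)

lemma psi_roots:
  assumes n: "2 \<le> n"
  shows "poly (of_int_poly (fibotomic n)) z = (0::complex) \<longleftrightarrow> (\<exists>k\<in>Pset n. z = rt n k)"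
proof -
  have fin: "finite (Sset n)" using Sset_finite n by simp
  have "poly (of_int_poly (fibotomic n)) z = (0::complex) \<longleftrightarrow> (\<exists>p\<in>Sset n. poly (of_int_poly p) z = (0::complex))"
    unfolding psi_map[OF n] poly_prod using fin by (simp add: prod_zero_iff)
  also have "\<dots> \<longleftrightarrow> (\<exists>k\<in>Pset n. z = rt n k)"
  proof
    assume "\<exists>p\<in>Sset n. poly (of_int_poly p) z = (0::complex)"
    then obtain p where pS: "p \<in> Sset n" and pz: "poly (of_int_poly p) z = (0::complex)" by blast
    have pd: "p dvd fib_poly n" and irr: "irreducible p" and nd: "\<And>k. 1 \<le> k \<Longrightarrow> k < n \<Longrightarrow> \<not> p dvd fib_poly k"
      using pS unfolding Sset_def by auto
    have "poly (Fc n) z = 0" unfolding Fc_map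
      by (rule root_dvd[OF of_int_poly_hom.hom_dvd[OF pd] pz])
    then obtain k where k: "0 < k" "k < n" "z = rt n k" using Fc_roots[of n z] n by auto
    have "coprime k n"
    proof (rule ccontr)
      assume nc: "\<not> coprime k n"
      define g where "g = gcd k n"
      have "g \<noteq> 1" using nc by (simp add: g_def coprime_iff_gcd_eq_1)
      moreover have "g > 0" using k by (simp add: g_def)
      ultimately have g1: "g > 1" by simp
      obtain d where d: "n = g * d" using gcd_dvd2[of k n] unfolding g_def by (rule dvdE)
      obtain j where j: "k = g * j" using gcd_dvd1[of k n] unfolding g_def by (rule dvdE)
      have d0: "0 < d" using d n by (cases d) auto
      have dn: "d < n" using d g1 d0 by simp
      have j0: "0 < j" using j k by (cases j) auto
      have jd: "j < d" using j d k g1 by simp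
      have "rt n k = rt d j" using k jd d0 n by (subst rt_eq_iff) (auto simp: d j)
      hence "poly (Fc d) z = 0" using Fc_root[OF j0 jd] k by simp
      hence "p dvd fib_poly d" using common_root_dvd[OF irr pz] unfolding Fc_map by blast
      thus False using nd[of d] d0 dn by simp
    qed
    thus "\<exists>k\<in>Pset n. z = rt n k" using k unfolding Pset_def by auto
  next
    assume "\<exists>k\<in>Pset n. z = rt n k"
    then obtain k where k: "0 < k" "k < n" "coprime k n" "z = rt n k" unfolding Pset_def by auto
    have n0: "0 < n" using n by simp
    have Fz: "poly (Fc n) z = 0" using Fc_root[OF k(1,2)] k by simp
    have "normalize (fib_poly n) = fib_poly n" by (rule monic_normalize[OF fib_monic[OF n0]])
    hence "fib_poly n = normalize (\<Prod>\<^sub># (prime_factorization (fib_poly n)))"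
      using prod_mset_prime_factorization_weak[OF fib_nz[OF n0]] by simp
    hence eqs: "normalize (\<Prod>\<^sub># (prime_factorization (fib_poly n))) = fib_poly n" by (rule sym)
    have "normalize (\<Prod>\<^sub># (prime_factorization (fib_poly n))) dvd \<Prod>\<^sub># (prime_factorization (fib_poly n))"
      by simp
    hence "fib_poly n dvd \<Prod>\<^sub># (prime_factorization (fib_poly n))" by (simp only: eqs)
    hence "Fc n dvd of_int_poly (\<Prod>\<^sub># (prime_factorization (fib_poly n)))"
      unfolding Fc_map by (rule of_int_poly_hom.hom_dvd)
    hence "poly (of_int_poly (\<Prod>\<^sub># (prime_factorization (fib_poly n)))) z = (0::complex)"
      using Fz root_dvd by blast
    hence "(\<Prod>p\<in>#prime_factorization (fib_poly n). poly (of_int_poly p) z) = (0::complex)"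
      unfolding poly_of_int_prod_mset .
    then obtain p where pm: "p \<in># prime_factorization (fib_poly n)" and pz: "poly (of_int_poly p) z = (0::complex)"
      by (auto simp: prod_mset_zero_iff)
    have pp: "prime p" "p dvd fib_poly n" using pm by (auto simp: in_prime_factors_iff)
    have "p \<in> Sset n" unfolding Sset_def
    proof (intro CollectI conjI allI impI)
      show "monic p" using prime_fac_monic[OF n0 pm] .
      show "irreducible p" using pp(1) by (simp add: prime_elem_imp_irreducible)
      show "p dvd fib_poly n" by (rule pp(2))
      fix k' assume k': "1 \<le> k' \<and> k' < n"
      show "\<not> p dvd fib_poly k'"
      proof
        assume "p dvd fib_poly k'"
        hence "poly (Fc k') z = 0" unfolding Fc_map by (rule root_dvd[OF of_int_poly_hom.hom_dvd pz])
        then obtain l where l: "0 < l" "l < k'" "z = rt k' l" using Fc_roots[of k' z] k' by auto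
        have "rt n k = rt k' l" using k l by simp
        hence "k * k' = l * n" using k l k' by (subst (asm) rt_eq_iff) auto
        hence "n dvd k * k'" by simp
        hence "n dvd k'" using k(3) by (simp add: coprime_dvd_mult_right_iff coprime_commute)
        thus False using k' by (auto dest: dvd_imp_le)
      qed
    qed
    thus "\<exists>p\<in>Sset n. poly (of_int_poly p) z = (0::complex)" using pz by blast
  qed
  finally show ?thesis .
qed

lemma psi_monic: "2 \<le> n \<Longrightarrow> lead_coeff (fibotomic n) = 1"
  unfolding fibotomic_Sset by (simp add: lead_coeff_prod Sset_def)

lemma psi_form:
  assumes n: "2 \<le> n"
  shows "(of_int_poly (fibotomic n) :: complex poly) = Gp n"
proof -
  define Q where "Q = (of_int_poly (fibotomic n) :: complex poly)"
  have n0: "0 < n" using n by simp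
  have lQ: "lead_coeff Q = 1" unfolding Q_def using psi_monic[OF n] by simp
  hence Q0: "Q \<noteq> 0" by auto
  have "Q dvd Fc n" unfolding Q_def Fc_map by (rule of_int_poly_hom.hom_dvd[OF fibotomic_dvd[OF n]])
  hence "order a Q \<le> 1" for a
    using dvd_imp_order_le[OF Fc_nz[OF n0]] Fc_order[OF n0, of a] by (meson le_trans)
  hence rsq: "rsquarefree Q" using Q0 by (simp add: rsquarefree_def')
  have "Q = Polynomial.smult (lead_coeff Q) (\<Prod>z|poly Q z = 0. [:-z, 1:])"
    using complex_poly_decompose_rsquarefree[OF rsq] by simp
  also have "{z. poly Q z = 0} = rt n ` Pset n" unfolding Q_def using psi_roots[OF n] by auto
  also have "(\<Prod>z\<in>rt n ` Pset n. [:-z, 1:]) = Gp n"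
  proof -
    have "inj_on (rt n) (Pset n)" by (rule inj_on_subset[OF rt_inj[OF n0]]) (auto simp: Pset_def)
    thus ?thesis by (simp add: prod.reindex Gp_def)
  qed
  finally have Qe: "Q = Polynomial.smult (lead_coeff Q) (Gp n)" .
  have "Q = Gp n" using Qe[unfolded lQ] by simp
  thus ?thesis unfolding Q_def .
qed


lemma sin_add_npi: "sin (x + real k * pi) = (-1)^k * sin x"
  by (simp add: sin_add)

lemma sin_npi_minus: "sin (real k * pi - x) = - ((-1)^k * sin x)"
  by (simp add: sin_diff)

lemma Fc_val:
  assumes "0 < j" "j < m"
  defines "s \<equiv> sin (real j * pi / real m)"
  shows "\<i> * poly (Fc N) (rt m j) * complex_of_real s = \<i> ^ N * complex_of_real (sin (real N * (real j * pi / real m)))"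
  unfolding rt_def s_def by (rule poly_Fc_trig)

lemma cmod_Fc_val:
  assumes "0 < j" "j < m"
  shows "cmod (poly (Fc N) (rt m j)) = \<bar>sin (real N * (real j * pi / real m))\<bar> / sin (real j * pi / real m)"
proof -
  have sp: "sin (real j * pi / real m) > 0" by (rule sin_pos_frac[OF assms])
  have "cmod (\<i> * poly (Fc N) (rt m j) * complex_of_real (sin (real j * pi / real m)))
     = cmod (\<i> ^ N * complex_of_real (sin (real N * (real j * pi / real m))))"
    using Fc_val[OF assms, of N] by simp
  hence "cmod (poly (Fc N) (rt m j)) * sin (real j * pi / real m) = \<bar>sin (real N * (real j * pi / real m))\<bar>"
    using sp by (simp add: norm_mult norm_power)
  thus ?thesis using sp by (simp add: field_simps)
qed

lemma cmod_Fc_mod: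
  assumes "0 < j" "j < m"
  shows "cmod (poly (Fc N) (rt m j)) = cmod (poly (Fc (N mod m)) (rt m j))"
proof -
  define x where "x = real (N mod m) * (real j * pi / real m)"
  have "real N * (real j * pi / real m) = x + real ((N div m) * j) * pi"
  proof -
    have "N = N div m * m + N mod m" by simp
    hence "real N = real (N div m) * real m + real (N mod m)" by (metis of_nat_add of_nat_mult)
    thus ?thesis unfolding x_def using assms by (simp add: field_simps)
  qed
  hence "sin (real N * (real j * pi / real m)) = (-1)^((N div m) * j) * sin x"
    by (simp only: sin_add_npi)
  hence "\<bar>sin (real N * (real j * pi / real m))\<bar> = \<bar>sin x\<bar>"
    by (simp add: abs_mult)
  thus ?thesis unfolding cmod_Fc_val[OF assms] x_def by simp
qed

lemma Fc_eps1:
  assumes "0 < j" "j < m"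
  shows "poly (Fc (Suc m)) (rt m j) = \<i> ^ m * (-1) ^ j"
proof -
  have sp: "sin (real j * pi / real m) > 0" by (rule sin_pos_frac[OF assms])
  have e: "real (Suc m) * (real j * pi / real m) = real j * pi / real m + real j * pi"
    using assms by (simp add: field_simps)
  have "\<i> * poly (Fc (Suc m)) (rt m j) * complex_of_real (sin (real j * pi / real m))
     = \<i> * (\<i> ^ m * (-1) ^ j) * complex_of_real (sin (real j * pi / real m))"
    using Fc_val[OF assms, of "Suc m"] unfolding e sin_add_npi by simp
  thus ?thesis using sp by simp
qed

lemma Fc_eps2:
  assumes "0 < j" "j < m" "0 < q"
  shows "poly (Fc (q * m - 1)) (rt m j) = (\<i> ^ m * (-1) ^ j) ^ q"
proof -
  have sp: "sin (real j * pi / real m) > 0" by (rule sin_pos_frac[OF assms(1,2)])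
  have qm: "1 \<le> q * m" using assms by simp
  have e: "real (q * m - 1) * (real j * pi / real m) = real (q * j) * pi - real j * pi / real m"
    using assms qm by (simp add: field_simps of_nat_diff)
  have "\<i> * poly (Fc (q * m - 1)) (rt m j) * complex_of_real (sin (real j * pi / real m))
     = \<i> ^ (q * m - 1) * (- ((-1) ^ (q * j))) * complex_of_real (sin (real j * pi / real m))"
    using Fc_val[OF assms(1,2), of "q * m - 1"] unfolding e sin_npi_minus by simp
  hence "(\<i> * poly (Fc (q * m - 1)) (rt m j)) * complex_of_real (sin (real j * pi / real m))
     = (\<i> ^ (q * m - 1) * (- ((-1) ^ (q * j)))) * complex_of_real (sin (real j * pi / real m))"
    by (simp only: mult.assoc)
  moreover have "complex_of_real (sin (real j * pi / real m)) \<noteq> 0" using sp by simp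
  ultimately have "\<i> * poly (Fc (q * m - 1)) (rt m j) = \<i> ^ (q * m - 1) * (- ((-1) ^ (q * j)))"
    by (rule mult_right_cancel[THEN iffD1, rotated])
  hence "\<i> * (\<i> * poly (Fc (q * m - 1)) (rt m j)) = \<i> * \<i> ^ (q * m - 1) * (- ((-1) ^ (q * j)))"
    by simp
  also have "\<i> * \<i> ^ (q * m - 1) = \<i> ^ (q * m)"
  proof -
    have "Suc (q * m - 1) = q * m" using qm by simp
    thus ?thesis by (simp only: power_Suc[symmetric])
  qed
  finally have "poly (Fc (q * m - 1)) (rt m j) = \<i> ^ (q * m) * (-1) ^ (q * j)" by simp
  also have "\<dots> = (\<i> ^ m * (-1) ^ j) ^ q"
    by (simp add: power_mult_distrib power_mult mult.commute)
  finally show ?thesis .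
qed

lemma fib_add: "fib_poly (a + Suc b) = fib_poly (Suc a) * fib_poly (Suc b) + fib_poly a * fib_poly b"
proof -
  have "fib_poly (a + Suc b) = fib_poly (Suc a) * fib_poly (Suc b) + fib_poly a * fib_poly b \<and>
        fib_poly (a + Suc (Suc b)) = fib_poly (Suc a) * fib_poly (Suc (Suc b)) + fib_poly a * fib_poly (Suc b)"
  proof (induction b)
    case 0
    show ?case by simp
  next
    case (Suc b)
    hence h0: "fib_poly (a + Suc b) = fib_poly (Suc a) * fib_poly (Suc b) + fib_poly a * fib_poly b"
      and h1: "fib_poly (a + Suc (Suc b)) = fib_poly (Suc a) * fib_poly (Suc (Suc b)) + fib_poly a * fib_poly (Suc b)"
      by auto
    have "fib_poly (a + Suc (Suc (Suc b))) = [:0,1:] * fib_poly (a + Suc (Suc b)) + fib_poly (a + Suc b)"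
      by simp
    also have "\<dots> = fib_poly (Suc a) * ([:0,1:] * fib_poly (Suc (Suc b)) + fib_poly (Suc b)) + fib_poly a * ([:0,1:] * fib_poly (Suc b) + fib_poly b)"
      unfolding h0 h1 by (simp add: algebra_simps del: fib_poly.simps)
    also have "\<dots> = fib_poly (Suc a) * fib_poly (Suc (Suc (Suc b))) + fib_poly a * fib_poly (Suc (Suc b))"
      by simp
    finally show ?case using h1 by simp
  qed
  thus ?thesis by blast
qed

lemma Fc_add: "Fc (a + Suc b) = Fc (Suc a) * Fc (Suc b) + Fc a * Fc b"
  unfolding Fc_map fib_add by (simp add: of_int_poly_hom.hom_add of_int_poly_hom.hom_mult)


definition Dv :: "nat \<Rightarrow> nat set" where
  "Dv N = {d. d dvd N \<and> 2 \<le> d}"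

definition lam :: "nat \<Rightarrow> nat" where
  "lam k = (if card (prime_factors k) = 1 then the_elem (prime_factors k) else 1)"

lemma lam_prime_power: "prime p \<Longrightarrow> 0 < i \<Longrightarrow> lam (p ^ i) = p"
  unfolding lam_def by (simp add: prime_factors_power prime_prime_factors)

lemma lam_ge1: "lam k \<ge> 1"
proof (cases "card (prime_factors k) = 1")
  case True
  then obtain p where p: "prime_factors k = {p}" by (auto simp: card_Suc_eq)
  hence "prime p" by auto
  thus ?thesis unfolding lam_def using p True prime_gt_0_nat[of p] by simp
qed (simp add: lam_def)

lemma lam_1[simp]: "lam 1 = 1" unfolding lam_def by simp

lemma lam_ne1:
  assumes "0 < k" "lam k \<noteq> 1"
  shows "\<exists>p i. prime p \<and> 0 < i \<and> k = p ^ i \<and> lam k = p"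
proof -
  have c: "card (prime_factors k) = 1" using assms(2) unfolding lam_def by (auto split: if_splits)
  then obtain p where p: "prime_factors k = {p}" by (auto simp: card_Suc_eq)
  hence pp: "prime p" by auto
  have "k = (\<Prod>p\<in>prime_factors k. p ^ multiplicity p k)" using prod_prime_factors[of k] assms by simp
  hence k: "k = p ^ multiplicity p k" unfolding p by simp
  have "0 < multiplicity p k" using p by (auto simp: prime_factors_multiplicity)
  moreover have "lam k = p" unfolding lam_def using c p by simp
  ultimately show ?thesis using pp k by blast
qed

lemma prod_lam_divisors:
  assumes q: "0 < q"
  shows "(\<Prod>e\<in>{e. e dvd q}. lam e) = q"
proof -
  define S where "S = Sigma (prime_factors q) (\<lambda>p. {1..multiplicity p q})"
  define h where "h = (\<lambda>(p::nat, i::nat). p ^ i)"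
  have finq: "finite {e. e dvd q}" using q by (auto intro: finite_subset[of _ "{..q}"] dest: dvd_imp_le)
  have sub: "h ` S \<subseteq> {e. e dvd q}"
  proof
    fix e assume "e \<in> h ` S"
    then obtain p i where "p \<in> prime_factors q" "i \<le> multiplicity p q" "e = p ^ i"
      unfolding S_def h_def by auto
    thus "e \<in> {e. e dvd q}" by (auto intro: multiplicity_dvd')
  qed
  have "(\<Prod>e\<in>{e. e dvd q}. lam e) = (\<Prod>e\<in>h ` S. lam e)"
  proof (rule prod.mono_neutral_right[OF finq sub])
    show "\<forall>e\<in>{e. e dvd q} - h ` S. lam e = 1"
    proof (intro ballI, rule ccontr)
      fix e assume e: "e \<in> {e. e dvd q} - h ` S" and ne: "lam e \<noteq> 1"
      have e0: "0 < e" using e q by (auto intro: Nat.gr0I)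
      obtain p i where pi: "prime p" "0 < i" "e = p ^ i" using lam_ne1[OF e0 ne] by blast
      have "p ^ i dvd q" using e pi by simp
      hence "i \<le> multiplicity p q" using q pi by (intro multiplicity_geI) auto
      moreover have "p \<in> prime_factors q" using pi \<open>p ^ i dvd q\<close> q
        using dvd_power[of i p] by (auto simp: in_prime_factors_iff intro: dvd_trans)
      ultimately have "e \<in> h ` S" unfolding S_def h_def using pi by force
      thus False using e by blast
    qed
  qed
  also have "\<dots> = (\<Prod>x\<in>S. lam (h x))"
  proof -
    have "inj_on h S"
    proof (rule inj_onI)
      fix x y assume x: "x \<in> S" and y: "y \<in> S" and eq: "h x = h y"
      obtain p i where xe: "x = (p, i)" by force
      obtain p' i' where ye: "y = (p', i')" by force
      have "prime p" "prime p'" "0 < i" "0 < i'" using x y unfolding xe ye S_def by auto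
      moreover have "p ^ i = p' ^ i'" using eq unfolding xe ye h_def by simp
      ultimately show "x = y" unfolding xe ye using prime_power_inj' by blast
    qed
    thus ?thesis by (simp add: prod.reindex)
  qed
  also have "\<dots> = (\<Prod>x\<in>S. fst x)"
    by (rule prod.cong[OF refl]) (auto simp: S_def h_def intro!: lam_prime_power dest: in_prime_factors_imp_prime)
  also have "\<dots> = (\<Prod>p\<in>prime_factors q. \<Prod>i\<in>{1..multiplicity p q}. p)"
    unfolding S_def by (subst prod.Sigma) (auto simp: case_prod_unfold)
  also have "\<dots> = (\<Prod>p\<in>prime_factors q. p ^ multiplicity p q)" by simp
  also have "\<dots> = q" using prod_prime_factors[of q] q by simp
  finally show ?thesis .
qed

definition tau :: "nat \<Rightarrow> nat \<Rightarrow> nat" where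
  "tau m d = (if m dvd d then lam (d div m) ^ totient m else if d dvd m then lam (m div d) ^ totient d else 1)"

lemma tau_ge1: "tau m d \<ge> 1"
  unfolding tau_def using lam_ge1 by (auto intro: one_le_power)

lemma tau_sym: "tau m d = tau d m"
  unfolding tau_def by (auto dest: dvd_antisym)

lemma NT1a:
  assumes N: "0 < N" and nd: "\<not> m dvd N"
  shows "(\<Prod>d\<in>Dv N. tau m d) = (\<Prod>d\<in>Dv (gcd N m). tau m d)"
proof (rule prod.mono_neutral_right)
  show "finite (Dv N)" unfolding Dv_def using N
    by (auto intro: finite_subset[of _ "{..N}"] dest: dvd_imp_le)
  show "Dv (gcd N m) \<subseteq> Dv N" unfolding Dv_def by auto
  show "\<forall>d\<in>Dv N - Dv (gcd N m). tau m d = 1"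
  proof
    fix d assume d: "d \<in> Dv N - Dv (gcd N m)"
    hence "d dvd N" "\<not> d dvd m" unfolding Dv_def by auto
    moreover have "\<not> m dvd d" using nd \<open>d dvd N\<close> by (auto intro: dvd_trans)
    ultimately show "tau m d = 1" unfolding tau_def by simp
  qed
qed

lemma NT1:
  assumes m: "0 < m" and N: "0 < N" and nd: "\<not> m dvd N"
  shows "(\<Prod>d\<in>Dv N. tau m d) = (\<Prod>d\<in>Dv (N mod m). tau m d)"
proof -
  have "N mod m \<noteq> 0" using nd by (simp add: dvd_eq_mod_eq_0)
  hence r0: "0 < N mod m" by simp
  have lt: "N mod m < m" using m by simp
  have nd2: "\<not> m dvd N mod m" using r0 lt dvd_imp_le[of m "N mod m"] by auto
  have "gcd (N mod m) m = gcd N m" using m by (simp add: gcd_mod_left)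
  thus ?thesis using NT1a[OF N nd] NT1a[OF r0 nd2] by simp
qed

lemma NT2:
  assumes m: "2 \<le> m" and q: "0 < q"
  shows "(\<Prod>d\<in>Dv (q * m) - Dv m. tau m d) = q ^ totient m"
proof -
  define E where "E = {e. e dvd q \<and> e \<noteq> 1}"
  have fin: "finite (Dv (q * m) - Dv m)" unfolding Dv_def using m q
    by (auto intro: finite_subset[of _ "{..q*m}"] dest: dvd_imp_le)
  have sub: "(\<lambda>e. e * m) ` E \<subseteq> Dv (q * m) - Dv m"
  proof
    fix d assume "d \<in> (\<lambda>e. e * m) ` E"
    then obtain e where e: "e dvd q" "e \<noteq> 1" "d = e * m" unfolding E_def by auto
    have "e \<noteq> 0" using e q by auto
    hence e2: "2 \<le> e" using e by simp
    hence "m < e * m" using m by simp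
    hence "\<not> e * m dvd m" using m by (auto dest: dvd_imp_le)
    moreover have "2 \<le> e * m" using e2 m by (metis le_trans mult_le_mono1 mult_2 le_add1 numeral_le_iff semiring_norm(69))
    ultimately show "d \<in> Dv (q * m) - Dv m" unfolding Dv_def using e by auto
  qed
  have "(\<Prod>d\<in>Dv (q * m) - Dv m. tau m d) = (\<Prod>d\<in>(\<lambda>e. e * m) ` E. tau m d)"
  proof (rule prod.mono_neutral_right[OF fin sub])
    show "\<forall>d\<in>Dv (q * m) - Dv m - (\<lambda>e. e * m) ` E. tau m d = 1"
    proof
      fix d assume d: "d \<in> Dv (q * m) - Dv m - (\<lambda>e. e * m) ` E"
      hence dd: "d dvd q * m" "2 \<le> d" "\<not> d dvd m" unfolding Dv_def by auto
      have "\<not> m dvd d"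
      proof
        assume "m dvd d"
        then obtain e where e: "d = m * e" by (rule dvdE)
        have "e dvd q" using dd(1) m unfolding e by (simp add: mult.commute)
        moreover have "e \<noteq> 1" using dd(3) e by auto
        ultimately have "d \<in> (\<lambda>e. e * m) ` E" unfolding E_def e by (auto simp: mult.commute)
        thus False using d by blast
      qed
      thus "tau m d = 1" unfolding tau_def using dd by simp
    qed
  qed
  also have "\<dots> = (\<Prod>e\<in>E. tau m (e * m))"
    by (subst prod.reindex) (use m in \<open>auto intro: inj_onI\<close>)
  also have "\<dots> = (\<Prod>e\<in>E. lam e ^ totient m)"
    by (rule prod.cong[OF refl]) (use m in \<open>simp add: tau_def\<close>)
  also have "\<dots> = (\<Prod>e\<in>E. lam e) ^ totient m" by (simp add: prod_power_distrib)
  also have "(\<Prod>e\<in>E. lam e) = (\<Prod>e\<in>{e. e dvd q}. lam e)"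
  proof (rule prod.mono_neutral_left)
    show "finite {e. e dvd q}" using q by (auto intro: finite_subset[of _ "{..q}"] dest: dvd_imp_le)
  qed (auto simp: E_def lam_def)
  also have "\<dots> = q" by (rule prod_lam_divisors[OF q])
  finally show ?thesis .
qed


lemma Dv_finite: "0 < N \<Longrightarrow> finite (Dv N)"
  unfolding Dv_def by (rule finite_subset[of _ "{..N}"]) (auto dest: dvd_imp_le)

lemma divisor_bij:
  assumes N: "0 < N"
  shows "bij_betw (\<lambda>(d, j). j * (N div d)) (Sigma (Dv N) Pset) {0<..<N}"
proof (rule bij_betwI')
  fix x y assume x: "x \<in> Sigma (Dv N) Pset" and y: "y \<in> Sigma (Dv N) Pset"
  obtain d j where xe: "x = (d, j)" by force
  obtain d' j' where ye: "y = (d', j')" by force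
  from x have dN: "d dvd N" "2 \<le> d" and jP: "0 < j" "j < d" "coprime j d"
    unfolding xe Dv_def Pset_def by auto
  from y have dN': "d' dvd N" "2 \<le> d'" and jP': "0 < j'" "j' < d'" "coprime j' d'"
    unfolding ye Dv_def Pset_def by auto
  obtain e where e: "N = d * e" using dN(1) by (rule dvdE)
  obtain e' where e': "N = d' * e'" using dN'(1) by (rule dvdE)
  have ed1: "N div d = e" using e dN(2) by simp
  have ed2: "N div d' = e'" using e' dN'(2) by simp
  note ed = ed1 ed2
  show "((case x of (d, j) \<Rightarrow> j * (N div d)) = (case y of (d, j) \<Rightarrow> j * (N div d))) = (x = y)"
  proof
    assume "(case x of (d, j) \<Rightarrow> j * (N div d)) = (case y of (d, j) \<Rightarrow> j * (N div d))"
    hence "j * (N div d) = j' * (N div d')" unfolding xe ye by simp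
    hence eq: "j * e = j' * e'" by (simp only: ed1 ed2)
    have "j * d' * N = j' * d * N"
    proof -
      have "j * d' * N = (j * e) * d * d'" using e by (simp add: algebra_simps)
      also have "\<dots> = (j' * e') * d * d'" using eq by simp
      also have "\<dots> = j' * d * N" using e' by (simp add: algebra_simps)
      finally show ?thesis .
    qed
    hence jd: "j * d' = j' * d" using N by simp
    have "d dvd j * d'" using jd by simp
    hence "d dvd d'" using jP(3) by (simp add: coprime_dvd_mult_right_iff coprime_commute)
    moreover have "d' dvd j' * d" using jd by (metis dvd_triv_right)
    hence "d' dvd d" using jP'(3) by (simp add: coprime_dvd_mult_right_iff coprime_commute)
    ultimately have "d = d'" by (rule dvd_antisym)
    moreover hence "j = j'" using jd dN(2) by simp
    ultimately show "x = y" unfolding xe ye by simp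
  qed simp
next
  fix x assume x: "x \<in> Sigma (Dv N) Pset"
  obtain d j where xe: "x = (d, j)" by force
  from x have dN: "d dvd N" "2 \<le> d" and jP: "0 < j" "j < d" "coprime j d"
    unfolding xe Dv_def Pset_def by auto
  obtain e where e: "N = d * e" using dN(1) by (rule dvdE)
  have ed: "N div d = e" using e dN(2) by auto
  have e0: "0 < e" using e N by (cases e) auto
  have "j * e < d * e" using jP e0 by simp
  thus "(case x of (d, j) \<Rightarrow> j * (N div d)) \<in> {0<..<N}" unfolding xe ed using e jP e0 by simp
next
  fix k assume k: "k \<in> {0<..<N}"
  define g where "g = gcd k N"
  have g0: "0 < g" using k unfolding g_def by simp
  obtain d where d: "N = g * d" using gcd_dvd2[of k N] unfolding g_def by (rule dvdE)
  obtain j where j: "k = g * j" using gcd_dvd1[of k N] unfolding g_def by (rule dvdE)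
  have cop: "coprime (k div g) (N div g)" unfolding g_def by (rule div_gcd_coprime) (use k in auto)
  have kg: "k div g = j" "N div g = d" using j d g0 by auto
  have d0: "0 < d" using d N by (cases d) auto
  have jd: "j < d" using k d j g0 by simp
  have j0: "0 < j" using k j by (cases j) auto
  have "2 \<le> d" using j0 jd by simp
  hence dDv: "d \<in> Dv N" unfolding Dv_def using d by simp
  have jPs: "j \<in> Pset d" unfolding Pset_def using j0 jd cop kg by simp
  have "N div d = g" using d d0 by simp
  hence "k = (case (d, j) of (d, j) \<Rightarrow> j * (N div d))" using j by simp
  thus "\<exists>x\<in>Sigma (Dv N) Pset. k = (case x of (d, j) \<Rightarrow> j * (N div d))"
    using dDv jPs by blast
qed

lemma rt_scale:
  assumes "d dvd N" "0 < N" "0 < d" "j \<le> d"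
  shows "rt N (j * (N div d)) = rt d j"
proof -
  obtain e where e: "N = d * e" using assms(1) by (rule dvdE)
  have ed: "N div d = e" using e assms by auto
  have "j * e \<le> d * e" using assms by simp
  thus ?thesis unfolding ed using assms e by (subst rt_eq_iff) auto
qed

lemma Fc_divisors:
  assumes N: "0 < N"
  shows "Fc N = (\<Prod>d\<in>Dv N. Gp d)"
proof -
  have "Fc N = (\<Prod>k\<in>{0<..<N}. [:- rt N k, 1:])" by (rule Fc_prod[OF N])
  also have "\<dots> = (\<Prod>x\<in>Sigma (Dv N) Pset. [:- rt N ((\<lambda>(d, j). j * (N div d)) x), 1:])"
    by (rule prod.reindex_bij_betw[OF divisor_bij[OF N], symmetric])
  also have "\<dots> = (\<Prod>x\<in>Sigma (Dv N) Pset. (\<lambda>(d, j). [:- rt d j, 1:]) x)"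
  proof (rule prod.cong[OF refl])
    fix x assume x: "x \<in> Sigma (Dv N) Pset"
    obtain d j where xe: "x = (d, j)" by force
    from x have "d dvd N" "2 \<le> d" "j < d" unfolding xe Dv_def Pset_def by auto
    thus "[:- rt N ((\<lambda>(d, j). j * (N div d)) x), 1:] = (\<lambda>(d, j). [:- rt d j, 1:]) x"
      unfolding xe using rt_scale[of d N j] N by simp
  qed
  also have "\<dots> = (\<Prod>d\<in>Dv N. \<Prod>j\<in>Pset d. [:- rt d j, 1:])"
    by (rule prod.Sigma[symmetric]) (auto intro: Dv_finite N)
  finally show ?thesis unfolding Gp_def .
qed

definition tt :: "nat \<Rightarrow> nat \<Rightarrow> real" where
  "tt m d = (\<Prod>j\<in>Pset m. \<Prod>k\<in>Pset d. cmod (rt m j - rt d k))"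

lemma poly_Gp: "poly (Gp d) x = (\<Prod>k\<in>Pset d. x - rt d k)"
  unfolding Gp_def poly_prod by simp

lemma prod_cmod_Gp:
  assumes "finite D"
  shows "(\<Prod>j\<in>Pset m. cmod (poly (\<Prod>d\<in>D. Gp d) (rt m j))) = (\<Prod>d\<in>D. tt m d)"
proof -
  have "(\<Prod>j\<in>Pset m. cmod (poly (\<Prod>d\<in>D. Gp d) (rt m j)))
      = (\<Prod>j\<in>Pset m. \<Prod>d\<in>D. \<Prod>k\<in>Pset d. cmod (rt m j - rt d k))"
    by (simp add: poly_prod poly_Gp prod_norm[symmetric])
  also have "\<dots> = (\<Prod>d\<in>D. tt m d)" unfolding tt_def by (rule prod.swap)
  finally show ?thesis .
qed

lemma tt_sym: "tt m d = tt d m"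
  unfolding tt_def by (subst prod.swap) (simp add: norm_minus_commute)

lemma R1:
  assumes m: "2 \<le> m" and N: "0 < N" and nd: "\<not> m dvd N"
  shows "(\<Prod>d\<in>Dv N. tt m d) = (\<Prod>d\<in>Dv (N mod m). tt m d)"
proof -
  have r0: "0 < N mod m" using nd by (simp add: mod_eq_0_iff_dvd[symmetric] del: mod_eq_0_iff_dvd) 
  have "(\<Prod>d\<in>Dv N. tt m d) = (\<Prod>j\<in>Pset m. cmod (poly (Fc N) (rt m j)))"
    unfolding Fc_divisors[OF N] by (rule prod_cmod_Gp[symmetric, OF Dv_finite[OF N]])
  also have "\<dots> = (\<Prod>j\<in>Pset m. cmod (poly (Fc (N mod m)) (rt m j)))"
    by (rule prod.cong[OF refl]) (auto simp: Pset_def intro: cmod_Fc_mod)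
  also have "\<dots> = (\<Prod>d\<in>Dv (N mod m). tt m d)"
    unfolding Fc_divisors[OF r0] by (rule prod_cmod_Gp[OF Dv_finite[OF r0]])
  finally show ?thesis .
qed


lemma Dv_mono: "m dvd N \<Longrightarrow> Dv m \<subseteq> Dv N"
  unfolding Dv_def by (auto intro: dvd_trans)

definition Hq :: "nat \<Rightarrow> nat \<Rightarrow> complex poly" where
  "Hq m q = (\<Prod>d\<in>Dv (q * m) - Dv m. Gp d)"

lemma Fc_Hq: assumes "0 < m" "0 < q" shows "Fc (q * m) = Fc m * Hq m q"
proof -
  have qm: "0 < q * m" using assms by simp
  have "Fc (q * m) = (\<Prod>d\<in>Dv (q * m). Gp d)" by (rule Fc_divisors[OF qm])
  also have "\<dots> = Hq m q * (\<Prod>d\<in>Dv m. Gp d)" unfolding Hq_def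
    by (rule prod.subset_diff) (auto intro: Dv_mono[of m "q * m", THEN subsetD] Dv_finite qm)
  also have "(\<Prod>d\<in>Dv m. Gp d) = Fc m" by (rule Fc_divisors[OF assms(1), symmetric])
  finally show ?thesis by (simp add: mult.commute)
qed

lemma Hq_rec: assumes "0 < m" "0 < q"
  shows "Hq m (Suc q) = Fc (Suc m) * Hq m q + Fc (q * m - 1)"
proof -
  have qm: "Suc (q * m - 1) = q * m" using assms by simp
  have "Fc m * Hq m (Suc q) = Fc (Suc q * m)" by (rule Fc_Hq[symmetric]) (use assms in auto)
  also have "Suc q * m = m + Suc (q * m - 1)" using qm by simp
  also have "Fc (m + Suc (q * m - 1)) = Fc (Suc m) * Fc (Suc (q * m - 1)) + Fc m * Fc (q * m - 1)"
    by (rule Fc_add)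
  also have "\<dots> = Fc m * (Fc (Suc m) * Hq m q + Fc (q * m - 1))"
    unfolding qm Fc_Hq[OF assms] by (simp add: algebra_simps)
  finally show ?thesis using Fc_nz[OF assms(1)] by simp
qed

lemma Hq_val:
  assumes j: "0 < j" "j < m" and q: "0 < q"
  shows "poly (Hq m q) (rt m j) = of_nat q * (\<i> ^ m * (-1) ^ j) ^ (q - 1)"
  using q
proof (induction q)
  case 0 thus ?case by simp
next
  case (Suc q)
  have m0: "0 < m" using j by simp
  show ?case
  proof (cases "q = 0")
    case True
    thus ?thesis by (simp add: Hq_def)
  next
    case False
    hence q0: "0 < q" by simp
    have "poly (Hq m (Suc q)) (rt m j) = poly (Fc (Suc m)) (rt m j) * poly (Hq m q) (rt m j) + poly (Fc (q * m - 1)) (rt m j)"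
      unfolding Hq_rec[OF m0 q0] by simp
    also have "\<dots> = (\<i> ^ m * (-1) ^ j) * (of_nat q * (\<i> ^ m * (-1) ^ j) ^ (q - 1)) + (\<i> ^ m * (-1) ^ j) ^ q"
      unfolding Fc_eps1[OF j] Fc_eps2[OF j q0] Suc.IH[OF q0] ..
    also have "\<dots> = of_nat (Suc q) * (\<i> ^ m * (-1) ^ j) ^ (Suc q - 1)"
    proof -
      have "(\<i> ^ m * (-1) ^ j) * (\<i> ^ m * (-1) ^ j) ^ (q - 1) = (\<i> ^ m * (-1) ^ j :: complex) ^ q"
        using q0 by (metis Suc_diff_1 power_Suc)
      thus ?thesis by (simp add: algebra_simps)
    qed
    finally show ?thesis .
  qed
qed

lemma Pset_totatives: "2 \<le> m \<Longrightarrow> Pset m = totatives m"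
  unfolding Pset_def totatives_def by (auto simp: order.order_iff_strict)

lemma card_Pset: "2 \<le> m \<Longrightarrow> card (Pset m) = totient m"
  by (simp add: Pset_totatives totient_def)

lemma R2:
  assumes m: "2 \<le> m" and q: "0 < q"
  shows "(\<Prod>d\<in>Dv (q * m) - Dv m. tt m d) = real q ^ totient m"
proof -
  have qm: "0 < q * m" using m q by simp
  have "(\<Prod>d\<in>Dv (q * m) - Dv m. tt m d) = (\<Prod>j\<in>Pset m. cmod (poly (Hq m q) (rt m j)))"
    unfolding Hq_def by (rule prod_cmod_Gp[symmetric]) (auto intro: Dv_finite qm)
  also have "\<dots> = (\<Prod>j\<in>Pset m. real q)"
  proof (rule prod.cong[OF refl])
    fix j assume "j \<in> Pset m"
    hence j: "0 < j" "j < m" unfolding Pset_def by auto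
    show "cmod (poly (Hq m q) (rt m j)) = real q"
      unfolding Hq_val[OF j q] by (simp add: norm_mult norm_power)
  qed
  also have "\<dots> = real q ^ totient m" using card_Pset[OF m] by simp
  finally show ?thesis .
qed



lemma prod_pos_tau: "finite A \<Longrightarrow> (\<Prod>d\<in>A. real (tau m d)) > 0"
  by (intro prod_pos) (use tau_ge1 in \<open>auto simp: Suc_le_eq\<close>)

lemma main_tt: "2 \<le> m \<Longrightarrow> m < n \<Longrightarrow> tt m n = real (tau m n)"
proof (induction n arbitrary: m rule: less_induct)
  case (less n m)
  have IH': "tt a b = real (tau a b)" if "2 \<le> a" "2 \<le> b" "a \<noteq> b" "a < n" "b < n" for a b
  proof (cases "a < b")
    case True thus ?thesis using less.IH[of b a] that by simp
  next
    case False
    hence "b < a" using that by simp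
    thus ?thesis using less.IH[of a b] that tt_sym tau_sym by metis
  qed
  have m2: "2 \<le> m" and mn: "m < n" using less.prems by auto
  have n0: "0 < n" using mn by simp
  have finn: "finite (Dv n)" by (rule Dv_finite[OF n0])
  show ?case
  proof (cases "m dvd n")
    case False
    define r where "r = n mod m"
    have r0: "0 < r" unfolding r_def using False by (simp add: Nat.gr0I dvd_eq_mod_eq_0)
    have rm: "r < m" unfolding r_def using m2 by simp
    have nDv: "n \<in> Dv n" unfolding Dv_def using m2 mn by simp
    have A: "(\<Prod>d\<in>Dv n - {n}. tt m d) = (\<Prod>d\<in>Dv n - {n}. real (tau m d))"
    proof (rule prod.cong[OF refl])
      fix d assume d: "d \<in> Dv n - {n}"
      hence "d dvd n" "d \<noteq> n" "2 \<le> d" unfolding Dv_def by auto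
      moreover hence "d < n" using dvd_imp_le[OF _ n0] by (metis le_neq_implies_less)
      moreover have "d \<noteq> m" using False \<open>d dvd n\<close> by auto
      ultimately show "tt m d = real (tau m d)" using IH'[of m d] m2 mn by simp
    qed
    have B: "(\<Prod>d\<in>Dv r. tt m d) = (\<Prod>d\<in>Dv r. real (tau m d))"
    proof (rule prod.cong[OF refl])
      fix d assume d: "d \<in> Dv r"
      hence "d dvd r" "2 \<le> d" unfolding Dv_def by auto
      hence "d \<le> r" using dvd_imp_le r0 by auto
      thus "tt m d = real (tau m d)" using IH'[of m d] m2 mn rm \<open>2 \<le> d\<close> by simp
    qed
    have "(\<Prod>d\<in>Dv n. tt m d) = (\<Prod>d\<in>Dv r. tt m d)" unfolding r_def by (rule R1[OF m2 n0 False])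
    hence eq1: "tt m n * (\<Prod>d\<in>Dv n - {n}. real (tau m d)) = (\<Prod>d\<in>Dv r. real (tau m d))"
      using prod.remove[OF finn nDv, of "tt m"] A B by simp
    have "(\<Prod>d\<in>Dv n. tau m d) = (\<Prod>d\<in>Dv r. tau m d)"
      unfolding r_def by (rule NT1) (use m2 n0 False in auto)
    hence "(\<Prod>d\<in>Dv n. real (tau m d)) = (\<Prod>d\<in>Dv r. real (tau m d))"
      by (metis of_nat_prod)
    moreover have "\<not> n dvd m" using mn m2 by (auto dest: dvd_imp_le)
    hence "tau m n = 1" unfolding tau_def using False by simp
    ultimately have eq2: "1 * (\<Prod>d\<in>Dv n - {n}. real (tau m d)) = (\<Prod>d\<in>Dv r. real (tau m d))"
      using prod.remove[OF finn nDv, of "\<lambda>d. real (tau m d)"] by simp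
    have "(\<Prod>d\<in>Dv n - {n}. real (tau m d)) > 0" by (rule prod_pos_tau) (use finn in auto)
    hence "tt m n = 1" using eq1 eq2 by simp
    thus ?thesis using \<open>tau m n = 1\<close> by simp
  next
    case True
    then obtain q where "n = m * q" by (rule dvdE)
    hence nq: "n = q * m" by (simp add: mult.commute)
    have q0: "0 < q" using nq n0 by (cases q) auto
    define S where "S = Dv n - Dv m"
    have finS: "finite S" unfolding S_def using finn by simp
    have nS: "n \<in> S" unfolding S_def Dv_def using m2 mn by (auto dest: dvd_imp_le)
    have A: "(\<Prod>d\<in>S - {n}. tt m d) = (\<Prod>d\<in>S - {n}. real (tau m d))"
    proof (rule prod.cong[OF refl])
      fix d assume d: "d \<in> S - {n}"
      hence "d dvd n" "d \<noteq> n" "2 \<le> d" "d \<notin> Dv m" unfolding S_def Dv_def by auto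
      moreover hence "d < n" using dvd_imp_le[OF _ n0] by (metis le_neq_implies_less)
      moreover have "d \<noteq> m" using \<open>d \<notin> Dv m\<close> m2 unfolding Dv_def by auto
      ultimately show "tt m d = real (tau m d)" using IH'[of m d] m2 mn by simp
    qed
    have "(\<Prod>d\<in>S. tt m d) = real q ^ totient m" unfolding S_def nq by (rule R2[OF m2 q0])
    hence eq1: "tt m n * (\<Prod>d\<in>S - {n}. real (tau m d)) = real q ^ totient m"
      using prod.remove[OF finS nS, of "tt m"] A by simp
    have "(\<Prod>d\<in>S. tau m d) = q ^ totient m" unfolding S_def nq by (rule NT2[OF m2 q0])
    hence "(\<Prod>d\<in>S. real (tau m d)) = real q ^ totient m" by (metis of_nat_prod of_nat_power)
    hence eq2: "real (tau m n) * (\<Prod>d\<in>S - {n}. real (tau m d)) = real q ^ totient m"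
      using prod.remove[OF finS nS, of "\<lambda>d. real (tau m d)"] by simp
    have "(\<Prod>d\<in>S - {n}. real (tau m d)) > 0" by (rule prod_pos_tau) (use finS in auto)
    hence Z: "(\<Prod>d\<in>S - {n}. real (tau m d)) \<noteq> 0" by simp
    have "tt m n * (\<Prod>d\<in>S - {n}. real (tau m d)) = real (tau m n) * (\<Prod>d\<in>S - {n}. real (tau m d))"
      using eq1 eq2 by linarith
    thus ?thesis using Z by simp
  qed
qed


lemma Pset_refl: "j \<in> Pset m \<Longrightarrow> m - j \<in> Pset m"
  unfolding Pset_def using gcd_diff2_nat[of j m]
  by (auto simp: coprime_iff_gcd_eq_1 gcd.commute)

lemma rt_refl: "j \<le> m \<Longrightarrow> 0 < m \<Longrightarrow> rt m (m - j) = - rt m j"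
proof -
  assume jm: "j \<le> m" and m: "0 < m"
  have "real (m - j) * pi / real m = pi - real j * pi / real m"
    using jm m by (simp add: of_nat_diff field_simps)
  thus ?thesis unfolding rt_def by (simp add: cos_diff)
qed

lemma Pset_half:
  assumes n: "3 \<le> n" and k: "k \<in> Pset n"
  shows "2 * k \<noteq> n"
proof
  assume e: "2 * k = n"
  have "coprime k n" "0 < k" using k unfolding Pset_def by auto
  hence "gcd k n = 1" by simp
  moreover have "k dvd n" using e by auto
  hence "gcd k n = k" by (rule gcd_nat.absorb1)
  ultimately have "k = 1" by simp
  thus False using e n by simp
qed

lemma T_real:
  assumes m: "2 \<le> m" and n: "3 \<le> n"
  shows "\<exists>R\<ge>0. (\<Prod>j\<in>Pset m. \<Prod>k\<in>Pset n. rt m j - rt n k) = complex_of_real R"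
proof -
  define Q where "Q = Pset m \<times> Pset n"
  define w where "w = (\<lambda>(j, k). rt m j - rt n k)"
  define s where "s = (\<lambda>(j::nat, k::nat). 2 * cos (real j * pi / real m) - 2 * cos (real k * pi / real n))"
  define \<sigma> where "\<sigma> = (\<lambda>(j, k). (m - j, n - (k::nat)))"
  define Q1 where "Q1 = {x\<in>Q. 2 * snd x < n}"
  have finQ: "finite Q" unfolding Q_def by simp
  have ws: "w x = \<i> * complex_of_real (s x)" for x
    unfolding w_def s_def rt_def by (cases x) (simp add: algebra_simps)
  have wsig: "x \<in> Q \<Longrightarrow> w (\<sigma> x) = - w x" for x
  proof -
    assume "x \<in> Q"
    then obtain j k where x: "x = (j, k)" "j \<in> Pset m" "k \<in> Pset n" unfolding Q_def by auto
    hence "j \<le> m" "k \<le> n" unfolding Pset_def by auto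
    thus ?thesis unfolding x \<sigma>_def w_def using m n by (simp add: rt_refl)
  qed
  have sigQ: "x \<in> Q \<Longrightarrow> \<sigma> x \<in> Q" for x unfolding Q_def \<sigma>_def by (auto intro: Pset_refl)
  have sig2: "x \<in> Q \<Longrightarrow> \<sigma> (\<sigma> x) = x" for x unfolding Q_def \<sigma>_def Pset_def by auto
  have split: "Q = Q1 \<union> \<sigma> ` Q1"
  proof
    show "Q \<subseteq> Q1 \<union> \<sigma> ` Q1"
    proof
      fix x assume xQ: "x \<in> Q"
      obtain j k where x: "x = (j, k)" by force
      have k: "k \<in> Pset n" using xQ unfolding x Q_def by auto
      hence kn: "k < n" unfolding Pset_def by auto
      show "x \<in> Q1 \<union> \<sigma> ` Q1"
      proof (cases "2 * k < n")
        case True thus ?thesis using xQ unfolding x Q1_def by auto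
      next
        case False
        hence "2 * k > n" using Pset_half[OF n k] by simp
        hence "\<sigma> x \<in> Q1" using sigQ[OF xQ] kn unfolding Q1_def x \<sigma>_def by auto
        moreover have "x = \<sigma> (\<sigma> x)" using sig2[OF xQ] by simp
        ultimately show ?thesis by blast
      qed
    qed
  next
    show "Q1 \<union> \<sigma> ` Q1 \<subseteq> Q" unfolding Q1_def using sigQ by auto
  qed
  have disj: "Q1 \<inter> \<sigma> ` Q1 = {}"
  proof (rule ccontr)
    assume "Q1 \<inter> \<sigma> ` Q1 \<noteq> {}"
    then obtain x where x1: "x \<in> Q1" and "x \<in> \<sigma> ` Q1" by blast
    then obtain y where y: "y \<in> Q1" "x = \<sigma> y" by blast
    obtain j k where ye: "y = (j, k)" by force
    have "2 * k < n" "k < n" using y(1) unfolding ye Q1_def Q_def Pset_def by auto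
    moreover have "2 * (n - k) < n" using x1 unfolding y(2) ye \<sigma>_def Q1_def by auto
    ultimately show False by simp
  qed
  have inj: "inj_on \<sigma> Q1"
    by (rule inj_onI) (metis sig2 Q1_def mem_Collect_eq)
  have "(\<Prod>j\<in>Pset m. \<Prod>k\<in>Pset n. rt m j - rt n k) = (\<Prod>x\<in>Q. w x)"
    unfolding Q_def w_def by (rule prod.cartesian_product)
  also have "\<dots> = (\<Prod>x\<in>Q1. w x) * (\<Prod>x\<in>\<sigma> ` Q1. w x)"
    unfolding split by (rule prod.union_disjoint) (use finQ split disj in \<open>auto intro: finite_subset\<close>)
  also have "(\<Prod>x\<in>\<sigma> ` Q1. w x) = (\<Prod>x\<in>Q1. w (\<sigma> x))"
    using inj by (simp add: prod.reindex)
  also have "\<dots> = (\<Prod>x\<in>Q1. - w x)"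
    by (rule prod.cong[OF refl]) (auto simp: Q1_def wsig)
  also have "(\<Prod>x\<in>Q1. w x) * (\<Prod>x\<in>Q1. - w x) = (\<Prod>x\<in>Q1. w x * - w x)"
    by (rule prod.distrib[symmetric])
  also have "\<dots> = (\<Prod>x\<in>Q1. complex_of_real ((s x)\<^sup>2))"
    by (rule prod.cong[OF refl]) (simp add: ws power2_eq_square algebra_simps)
  also have "\<dots> = complex_of_real (\<Prod>x\<in>Q1. (s x)\<^sup>2)" by simp
  finally show ?thesis by (intro exI[of _ "\<Prod>x\<in>Q1. (s x)\<^sup>2"]) (auto intro: prod_nonneg)
qed

lemma T_value:
  assumes m: "2 \<le> m" and mn: "m < n"
  shows "(\<Prod>j\<in>Pset m. poly (Gp n) (rt m j)) = complex_of_real (real (tau m n))"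
proof -
  have n: "3 \<le> n" using m mn by simp
  obtain R where R: "R \<ge> 0" "(\<Prod>j\<in>Pset m. \<Prod>k\<in>Pset n. rt m j - rt n k) = complex_of_real R"
    using T_real[OF m n] by blast
  have "cmod (\<Prod>j\<in>Pset m. \<Prod>k\<in>Pset n. rt m j - rt n k) = tt m n"
    unfolding tt_def by (simp add: prod_norm[symmetric])
  hence "R = tt m n" using R by simp
  thus ?thesis using R main_tt[OF m mn] by (simp add: poly_Gp)
qed

lemma prod_mset_sum_single: "finite A \<Longrightarrow> (\<Prod>a\<in>#(\<Sum>j\<in>A. {#r j#}). f a) = (\<Prod>j\<in>A. (f (r j) :: 'a :: comm_monoid_mult))"
  by (induction A rule: finite_induct) auto

lemma res_final:
  assumes m: "2 \<le> m" and mn: "m < n"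
  shows "resultant (fibotomic m) (fibotomic n) = int (tau m n)"
proof -
  have n: "2 \<le> n" using m mn by simp
  have G0: "Gp m \<noteq> 0" unfolding Gp_def by (simp add: prod_zero_iff)
  have lG: "lead_coeff (Gp m) = 1" unfolding Gp_def by (simp add: lead_coeff_prod)
  have "proots (Gp m) = (\<Sum>j\<in>Pset m. proots [:-rt m j, 1:])"
    unfolding Gp_def by (rule proots_prod) simp
  also have "\<dots> = (\<Sum>j\<in>Pset m. {#rt m j#})" by (simp only: proots_linear_factor minus_minus)
  finally have pr: "proots (Gp m) = (\<Sum>j\<in>Pset m. {#rt m j#})" .
  have "complex_of_int (resultant (fibotomic m) (fibotomic n))
      = resultant (of_int_poly (fibotomic m)) (of_int_poly (fibotomic n))"
    by (simp add: of_int_hom.resultant_hom)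
  also have "\<dots> = resultant (Gp m) (Gp n)" unfolding psi_form[OF m] psi_form[OF n] ..
  also have "\<dots> = (\<Prod>j\<in>Pset m. poly (Gp n) (rt m j))"
    unfolding resultant_roots[OF G0] lG pr by (simp add: prod_mset_sum_single)
  also have "\<dots> = complex_of_int (int (tau m n))" unfolding T_value[OF m mn] by simp
  finally show ?thesis by (simp only: of_int_eq_iff)
qed


theorem mainTheorem10:
  fixes m n :: nat
  assumes "2 \<le> m" and "m < n"
  shows "(\<exists>p \<alpha>. prime p \<and> \<alpha> > 0 \<and> n = m * p ^ \<alpha> \<and>
            resultant (fibotomic m) (fibotomic n) = int p ^ totient m)
       \<or> ((\<nexists>p \<alpha>. prime p \<and> \<alpha> > 0 \<and> n = m * p ^ \<alpha>) \<and>
            resultant (fibotomic m) (fibotomic n) = 1)"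
proof (cases "\<exists>p \<alpha>. prime p \<and> \<alpha> > 0 \<and> n = m * p ^ \<alpha>")
  case True
  then obtain p \<alpha> where p: "prime p" "\<alpha> > 0" "n = m * p ^ \<alpha>" by blast
  have m0: "0 < m" using assms by simp
  have "tau m n = p ^ totient m"
    unfolding tau_def using p m0 by (simp add: lam_prime_power)
  hence "resultant (fibotomic m) (fibotomic n) = int p ^ totient m"
    using res_final[OF assms] by simp
  thus ?thesis using p by blast
next
  case False
  have m0: "0 < m" using assms by simp
  have "tau m n = 1"
  proof (cases "m dvd n")
    case True
    then obtain k where k: "n = m * k" by (rule dvdE)
    have k0: "0 < k" using k assms by (cases k) auto
    have "n div m = k" using k m0 by simp
    moreover have "lam k = 1"
    proof (rule ccontr)
      assume "lam k \<noteq> 1"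
      then obtain p i where "prime p" "0 < i" "k = p ^ i" using lam_ne1[OF k0] by blast
      thus False using False k by blast
    qed
    ultimately show ?thesis unfolding tau_def using True by simp
  next
    case False
    moreover have "\<not> n dvd m" using assms by (auto dest: dvd_imp_le)
    ultimately show ?thesis unfolding tau_def by simp
  qed
  hence "resultant (fibotomic m) (fibotomic n) = 1" using res_final[OF assms] by simp
  thus ?thesis using False by blast
qed


end
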